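(* Let $n\ge 2$, and let $L=(\ell_1,\dots,\ell_n)\in\mathbb{Z}^n$ and $K=(k_1,\dots,k_n)\in\mathbb{Z}^n$ with $0<k_i<\ell_i$ for each $1\le i\le n$. Let $\tau=\prod_{i=1}^n\ell_i$, $\kappa=\prod_{i=1}^n k_i$, $G=\mathbb{Z}_{\tau-\kappa}$, and assume that $k_i$ is invertible in the ring $G$ for each $2\le i\le n$. Define $\beta_1=1$ and $\beta_{i+1}=k_{i+1}^{-1}\ell_i\beta_i$ for $1\le i\le n-1$ (computed in $G$). Then $\mathcal{S}_{L,K}$ splits $G$ with the splitting sequence $\beta=\beta_1,\dots,\beta_n$.
   Context: For integer vectors $L,K$ with $0<k_i<\ell_i$, the discrete $n$-dimensional chair is $\mathcal{S}_{L,K}=\{(x_1,\dots,x_n)\in\mathbb{Z}^n: 0\le x_i<\ell_i \text{ for all } i, \text{ and there exists } j \text{ with } x_j<\ell_j-k_j\}$; it has $\prod\ell_i-\prod k_i$ elements. $\mathbb{Z}_m$ denotes the ring of integers modulo $m$. For an Abelian group $G$, a sequence $\beta=\beta_1,\dots,\beta_n$ of elements of $G$, and $X=(x_1,\dots,x_n)\in\mathbb{Z}^n$, set $X\cdot\beta=\sum_{i=1}^n x_i\beta_i\in G$. A finite set $\mathcal{S}\subset\mathbb{Z}^n$ splits $G$ with splitting sequence $\beta$ if the set $\{\mathcal{E}\cdot\beta:\mathcal{E}\in\mathcal{S}\}$ consists of $|\mathcal{S}|$ distinct elements of $G$. *)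

theory Defs
  imports "HOL-Number_Theory.Number_Theory"
begin

text \<open>Points of \<int>^n are represented as functions nat \<Rightarrow> int, indexed by 1..n,
  and equal to 0 outside {1..n}.\<close>

definition chair :: "nat \<Rightarrow> (nat \<Rightarrow> int) \<Rightarrow> (nat \<Rightarrow> int) \<Rightarrow> (nat \<Rightarrow> int) set" where
  "chair n L K = {X. (\<forall>i. i \<notin> {1..n} \<longrightarrow> X i = 0) \<and>
                     (\<forall>i\<in>{1..n}. 0 \<le> X i \<and> X i < L i) \<and>
                     (\<exists>j\<in>{1..n}. X j < L j - K j)}"

text \<open>Elements of \<int>_m are represented by integers (residues mod m).
  X \<cdot> \<beta> computed in \<int>_m is the residue of the integer sum.\<close>

definition dotG :: "int \<Rightarrow> nat \<Rightarrow> (nat \<Rightarrow> int) \<Rightarrow> (nat \<Rightarrow> int) \<Rightarrow> int" where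
  "dotG m n X \<beta> = (\<Sum>i=1..n. X i * \<beta> i) mod m"

text \<open>S splits \<int>_m with splitting sequence \<beta>: the values X\<cdot>\<beta> (X \<in> S) are |S| distinct
  elements of \<int>_m, i.e. the map X \<mapsto> X\<cdot>\<beta> is injective on S.\<close>

definition splits :: "(nat \<Rightarrow> int) set \<Rightarrow> int \<Rightarrow> nat \<Rightarrow> (nat \<Rightarrow> int) \<Rightarrow> bool" where
  "splits S m n \<beta> \<longleftrightarrow> finite S \<and> card ((\<lambda>X. dotG m n X \<beta>) ` S) = card S"

text \<open>beta_aux j = \<beta>_(j+1):  \<beta>_1 = 1,  \<beta>_(i+1) = k_(i+1)^(-1) * l_i * \<beta>_i  in \<int>_m.\<close>

primrec beta_aux :: "int \<Rightarrow> (nat \<Rightarrow> int) \<Rightarrow> (nat \<Rightarrow> int) \<Rightarrow> nat \<Rightarrow> int" where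
  "beta_aux m L K 0 = 1 mod m"
| "beta_aux m L K (Suc j) =
     (modular_inverse m (K (Suc (Suc j))) * L (Suc j) * beta_aux m L K j) mod m"

definition beta :: "int \<Rightarrow> (nat \<Rightarrow> int) \<Rightarrow> (nat \<Rightarrow> int) \<Rightarrow> nat \<Rightarrow> int" where
  "beta m L K i = beta_aux m L K (i - 1)"

end

theory Submission
  imports Defs
begin

lemma ext_arg:
  fixes a X Y L K :: "nat \<Rightarrow> int"
  assumes n1: "1 \<le> n" and a0: "a 0 = a n"
   and rec: "\<forall>j\<in>{1..n}. X j - Y j = L j * a j - K j * a (j-1)"
   and KL: "\<forall>j\<in>{1..n}. 0 < K j \<and> K j < L j"
   and XY: "\<forall>j\<in>{1..n}. 0 \<le> X j \<and> X j < L j \<and> 0 \<le> Y j \<and> Y j < L j"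
   and ch: "\<exists>j\<in>{1..n}. X j < L j - K j"
  shows "\<forall>j\<in>{1..n}. a j \<le> 0"
proof (rule ccontr)
  assume "\<not> ?thesis" then obtain i where i: "i\<in>{1..n}" "a i \<ge> 1" by (auto simp: not_le)
  have step: "a (j-1) \<ge> a j" if jn: "j\<in>{1..n}" and aj: "a j \<ge> 1" for j
  proof (rule ccontr)
    assume "\<not> a (j-1) \<ge> a j" hence lt: "a (j-1) \<le> a j - 1" by simp
    have kl: "0 < K j \<and> K j < L j" using KL jn by blast
    have xy: "0 \<le> X j \<and> X j < L j \<and> 0 \<le> Y j \<and> Y j < L j" using XY jn by blast
    have r: "X j - Y j = L j * a j - K j * a (j-1)" using rec jn by blast
    have "K j * a (j-1) \<le> K j * (a j - 1)" using kl lt by (intro mult_left_mono) auto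
    moreover have "(L j - K j) * (a j - 1) \<ge> 0" using kl aj by (intro mult_nonneg_nonneg) auto
    ultimately have "L j * a j - K j * a (j-1) \<ge> L j" by (simp add: algebra_simps)
    then show False using r xy by linarith
  qed
  have down: "a (i-k) \<ge> a i" if "k \<le> i" for k
    using that
  proof (induction k)
    case 0 then show ?case by simp
  next
    case (Suc k)
    then have h: "a (i-k) \<ge> a i" by simp
    have ik: "i - k \<in> {1..n}" using Suc.prems i(1) by auto
    have "a (i-k) \<ge> 1" using h i(2) by simp
    with ik have st: "a (i-k-1) \<ge> a (i-k)" by (rule step)
    have e: "i - Suc k = i - k - 1" by simp
    show ?case unfolding e using h st by linarith
  qed
  have "a (i-i) \<ge> a i" by (rule down) simp
  then have an: "a n \<ge> 1" using a0 i(2) by simp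
  have down2: "a (n-k) \<ge> a n" if "k \<le> n" for k
    using that
  proof (induction k)
    case 0 then show ?case by simp
  next
    case (Suc k)
    then have h: "a (n-k) \<ge> a n" by simp
    have ik: "n - k \<in> {1..n}" using Suc.prems by auto
    have "a (n-k) \<ge> 1" using h an by simp
    with ik have st: "a (n-k-1) \<ge> a (n-k)" by (rule step)
    have e: "n - Suc k = n - k - 1" by simp
    show ?case unfolding e using h st by linarith
  qed
  have ge: "a j \<ge> a n" if "j \<le> n" for j
    using down2[of "n-j"] that by simp
  have up: "a j \<le> a 0" if "j \<le> n" for j
    using that
  proof (induction j)
    case 0 then show ?case by simp
  next
    case (Suc j)
    have "a (Suc j) \<ge> 1" using ge[OF Suc.prems] an by simp
    moreover have "Suc j \<in> {1..n}" using Suc.prems by simp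
    ultimately have "a j \<ge> a (Suc j)" using step[of "Suc j"] by simp
    then show ?case using Suc by simp
  qed
  have eq: "a j = a n" if "j \<le> n" for j using ge[OF that] up[OF that] a0 by simp
  obtain j where j: "j\<in>{1..n}" "X j < L j - K j" using ch by blast
  have kl: "0 < K j \<and> K j < L j" using KL j(1) by blast
  have xy: "0 \<le> X j \<and> X j < L j \<and> 0 \<le> Y j \<and> Y j < L j" using XY j(1) by blast
  have r: "X j - Y j = L j * a j - K j * a (j-1)" using rec j(1) by blast
  have "j \<le> n" "j - 1 \<le> n" using j(1) by auto
  then have "a j = a n" "a (j-1) = a n" using eq by blast+
  with r have "X j - Y j = (L j - K j) * a n" by (simp add: algebra_simps)
  moreover have "(L j - K j) * a n \<ge> L j - K j"
    using mult_left_mono[of 1 "a n" "L j - K j"] an kl by simp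
  ultimately show False using xy j(2) by linarith
qed

theorem mainTheorem2:
  fixes n :: nat and L K :: "nat \<Rightarrow> int"
  assumes "n \<ge> 2"
    and "\<forall>i\<in>{1..n}. 0 < K i \<and> K i < L i"
    and "\<forall>i\<in>{2..n}. \<exists>u. [K i * u = 1] (mod ((\<Prod>j=1..n. L j) - (\<Prod>j=1..n. K j)))"
  shows "splits (chair n L K) ((\<Prod>j=1..n. L j) - (\<Prod>j=1..n. K j)) n
           (beta ((\<Prod>j=1..n. L j) - (\<Prod>j=1..n. K j)) L K)"
proof -
  define m where "m = (\<Prod>j=1..n. L j) - (\<Prod>j=1..n. K j)"
  define pl where "pl i = (\<Prod>j=1..i. L j)" for i
  define sk where "sk i = (\<Prod>j\<in>{Suc i..n}. K j)" for i
  define w where "w i = pl (i-1) * sk i" for i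
  have KL: "\<forall>i\<in>{1..n}. 0 < K i \<and> K i < L i" using assms(2) .
  have Lpos: "0 < L j" if "j \<in> {1..n}" for j
  proof -
    have "0 < K j \<and> K j < L j" using KL that by blast
    then show ?thesis by simp
  qed
  have Kpos: "0 < K j" if "j \<in> {1..n}" for j
    using KL that by blast
  have plpos: "pl i > 0" if "i \<le> n" for i
    unfolding pl_def
  proof (rule prod_pos)
    fix j assume "j \<in> {1..i}"
    then have "j \<in> {1..n}" using that by simp
    then show "0 < L j" by (rule Lpos)
  qed
  have skpos: "sk i > 0" for i
    unfolding sk_def
  proof (rule prod_pos)
    fix j assume "j \<in> {Suc i..n}"
    then have "j \<in> {1..n}" by simp
    then show "0 < K j" by (rule Kpos)
  qed
  have wpos: "w i > 0" if "i \<le> n" for i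
    unfolding w_def using plpos[of "i-1"] skpos[of i] that by simp
  have pl_Suc: "pl (Suc i) = pl i * L (Suc i)" for i
    unfolding pl_def by (simp add: prod.cl_ivl_Suc)
  have pl0: "pl 0 = 1" unfolding pl_def by simp
  have sk_Suc: "sk i = K (Suc i) * sk (Suc i)" if "i < n" for i
    unfolding sk_def using that by (simp add: prod.atLeast_Suc_atMost)
  have skn: "sk n = 1" by (simp add: sk_def)
  have sk0: "sk 0 = (\<Prod>j=1..n. K j)" by (simp add: sk_def)
  have mpl: "m = pl n - sk 0" by (simp add: m_def pl_def sk0)
  have Lw: "L i * w i = pl i * sk i" if "1 \<le> i" for i
  proof -
    have "pl i = pl (i-1) * L i" using pl_Suc[of "i-1"] that by simp
    then show ?thesis unfolding w_def by simp
  qed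
  have Kw: "K i * w i = pl (i-1) * sk (i-1)" if "1 \<le> i" "i \<le> n" for i
  proof -
    have "sk (i-1) = K i * sk i" using sk_Suc[of "i-1"] that by simp
    then show ?thesis unfolding w_def by simp
  qed
  have copm: "coprime (K i) m" if "i\<in>{2..n}" for i
  proof -
    have "\<exists>u. [K i * u = 1] (mod m)" using assms(3) that unfolding m_def by blast
    then obtain u where "[K i * u = 1] (mod m)" by blast
    then have "[1 = K i * u] (mod m)" by (rule cong_sym)
    then have "coprime (K i * u) m" by (rule cong_imp_coprime) simp
    then show ?thesis by simp
  qed
  have copL: "coprime (K i) (L j)" if "i\<in>{2..n}" "j\<in>{1..n}" for i j
  proof -
    have "K i dvd sk 0" unfolding sk0 using that(1) by (intro dvd_prodI) auto
    then obtain q where q: "sk 0 = K i * q" by blast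
    have "pl n = q * K i + m" using mpl q by simp
    then have "gcd (K i) (pl n) = gcd (K i) m" by (simp add: gcd_add_mult)
    then have "coprime (K i) (pl n)" using copm[OF that(1)] by (simp add: coprime_iff_gcd_eq_1)
    moreover have "L j dvd pl n" unfolding pl_def using that(2) by (intro dvd_prodI) auto
    ultimately show ?thesis using coprime_divisors[of "K i" "K i" "L j" "pl n"] by simp
  qed
  have cop: "coprime (pl i) (sk i)" if i1: "1 \<le> i" for i
  proof -
    have "coprime (L a) (K b)" if ab: "a\<in>{1..i}" "b\<in>{Suc i..n}" for a b
    proof -
      have "b \<in> {2..n}" "a \<in> {1..n}" using ab i1 by auto
      then show ?thesis using copL[of b a] by (simp add: coprime_commute)
    qed
    then show ?thesis unfolding pl_def sk_def
      by (intro prod_coprime_left prod_coprime_right) simp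
  qed
  have bwa: "[beta_aux m L K j * sk 1 = w (Suc j)] (mod m)" if "Suc j \<le> n" for j
    using that
  proof (induction j)
    case 0
    have "[1 mod m * sk 1 = 1 * sk 1] (mod m)" by (intro cong_mult) simp_all
    moreover have "w (Suc 0) = sk 1" by (simp add: w_def pl0)
    ultimately show ?case by simp
  next
    case (Suc j)
    have "Suc j \<le> n" using Suc.prems by simp
    then have IH: "[beta_aux m L K j * sk 1 = w (Suc j)] (mod m)" by (rule Suc.IH)
    define v where "v = modular_inverse m (K (Suc (Suc j)))"
    have "[beta_aux m L K (Suc j) * sk 1 = v * L (Suc j) * (beta_aux m L K j * sk 1)] (mod m)"
    proof -
      have "[beta_aux m L K (Suc j) * sk 1 = (v * L (Suc j) * beta_aux m L K j) * sk 1] (mod m)"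
        unfolding v_def beta_aux.simps by (intro cong_mult) simp_all
      then show ?thesis by (simp add: mult.assoc)
    qed
    also have "[v * L (Suc j) * (beta_aux m L K j * sk 1) = v * L (Suc j) * w (Suc j)] (mod m)"
      by (rule cong_mult) (rule cong_refl, rule IH)
    also have "v * L (Suc j) * w (Suc j) = (v * K (Suc (Suc j))) * w (Suc (Suc j))"
    proof -
      have "L (Suc j) * w (Suc j) = pl (Suc j) * sk (Suc j)" using Lw[of "Suc j"] by simp
      also have "\<dots> = K (Suc (Suc j)) * w (Suc (Suc j))"
        using sk_Suc[of "Suc j"] Suc.prems by (simp add: w_def)
      finally show ?thesis by (simp add: mult.assoc)
    qed
    also have "[(v * K (Suc (Suc j))) * w (Suc (Suc j)) = 1 * w (Suc (Suc j))] (mod m)"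
    proof (rule cong_mult)
      have "Suc (Suc j) \<in> {2..n}" using Suc.prems by auto
      then have "coprime (K (Suc (Suc j))) m" by (rule copm)
      then show "[v * K (Suc (Suc j)) = 1] (mod m)" unfolding v_def by (rule cong_modular_inverse2)
    qed simp
    finally show ?case by simp
  qed
  have bw: "[beta m L K i * sk 1 = w i] (mod m)" if "1 \<le> i" "i \<le> n" for i
    using bwa[of "i-1"] that by (simp add: beta_def)
  have inj: "inj_on (\<lambda>X. dotG m n X (beta m L K)) (chair n L K)"
  proof (rule inj_onI)
    fix X Y assume X: "X \<in> chair n L K" and Y: "Y \<in> chair n L K"
      and eq: "dotG m n X (beta m L K) = dotG m n Y (beta m L K)"
    let ?b = "beta m L K"
    have c1: "[(\<Sum>i=1..n. X i * ?b i) = (\<Sum>i=1..n. Y i * ?b i)] (mod m)"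
      using eq unfolding dotG_def cong_def .
    have c2: "[(\<Sum>i=1..n. X i * ?b i) * sk 1 = (\<Sum>i=1..n. Y i * ?b i) * sk 1] (mod m)"
      using c1 by (rule cong_mult) (rule cong_refl)
    have sw: "[(\<Sum>i=1..n. Z i * ?b i) * sk 1 = (\<Sum>i=1..n. Z i * w i)] (mod m)" for Z
    proof -
      have "(\<Sum>i=1..n. Z i * ?b i) * sk 1 = (\<Sum>i=1..n. Z i * (?b i * sk 1))"
        by (simp add: sum_distrib_right mult.assoc)
      moreover have "[(\<Sum>i=1..n. Z i * (?b i * sk 1)) = (\<Sum>i=1..n. Z i * w i)] (mod m)"
      proof (rule cong_sum)
        fix i assume "i \<in> {1..n}"
        then have "[?b i * sk 1 = w i] (mod m)" using bw by simp
        then show "[Z i * (?b i * sk 1) = Z i * w i] (mod m)" by (rule cong_mult[OF cong_refl])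
      qed
      ultimately show ?thesis by simp
    qed
    have c3: "[(\<Sum>i=1..n. X i * w i) = (\<Sum>i=1..n. Y i * w i)] (mod m)"
      using cong_trans[OF cong_trans[OF cong_sym[OF sw[of X]] c2] sw[of Y]] .
    define d where "d i = X i - Y i" for i
    have "m dvd (\<Sum>i=1..n. X i * w i) - (\<Sum>i=1..n. Y i * w i)"
      using c3 by (simp add: cong_iff_dvd_diff)
    also have "(\<Sum>i=1..n. X i * w i) - (\<Sum>i=1..n. Y i * w i) = (\<Sum>i=1..n. d i * w i)"
      by (simp add: d_def sum_subtractf left_diff_distrib)
    finally obtain t where S: "(\<Sum>i=1..n. d i * w i) = m * t" by blast
    define A where "A i = t * sk 0 + (\<Sum>j=1..i. d j * w j)" for i
    have A2: "A i = t * pl n - (\<Sum>j\<in>{Suc i..n}. d j * w j)" if "i \<le> n" for i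
    proof -
      have "{1..n} = {1..i} \<union> {Suc i..n}" using that by auto
      then have "(\<Sum>j=1..n. d j * w j) = (\<Sum>j=1..i. d j * w j) + (\<Sum>j\<in>{Suc i..n}. d j * w j)"
        by (simp add: sum.union_disjoint)
      then show ?thesis using S mpl unfolding A_def by (simp add: algebra_simps)
    qed
    have dv1: "sk i dvd A i" if "i \<le> n" for i
    proof -
      have "sk i dvd sk 0" unfolding sk_def by (rule prod_dvd_prod_subset) auto
      moreover have "sk i dvd d j * w j" if "j \<in> {1..i}" for j
      proof -
        have "sk i dvd sk j" unfolding sk_def by (rule prod_dvd_prod_subset) (use that in auto)
        then show ?thesis unfolding w_def by simp
      qed
      ultimately show ?thesis unfolding A_def by (intro dvd_add dvd_sum) auto
    qed
    have dv2: "pl i dvd A i" if "i \<le> n" for i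
    proof -
      have "pl i dvd pl n" unfolding pl_def by (rule prod_dvd_prod_subset) (use that in auto)
      moreover have "pl i dvd d j * w j" if "j \<in> {Suc i..n}" for j
      proof -
        have "pl i dvd pl (j-1)" unfolding pl_def by (rule prod_dvd_prod_subset) (use that in auto)
        then show ?thesis unfolding w_def by simp
      qed
      ultimately show ?thesis unfolding A2[OF that] by (intro dvd_diff dvd_sum) auto
    qed
    have dvP: "pl i * sk i dvd A i" if "i \<le> n" for i
    proof (cases "i = 0")
      case True then show ?thesis using dv1[OF that] by (simp add: pl0)
    next
      case False
      then have "coprime (pl i) (sk i)" using cop by simp
      then show ?thesis using dv1[OF that] dv2[OF that] by (intro divides_mult)
    qed
    define a where "a i = A i div (pl i * sk i)" for i
    have Aa: "A i = a i * (pl i * sk i)" if "i \<le> n" for i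
      unfolding a_def using dvP[OF that] by simp
    have a0: "a 0 = t"
    proof -
      have "A 0 = t * sk 0" unfolding A_def by simp
      then show ?thesis unfolding a_def using skpos[of 0] by (simp add: pl0)
    qed
    have an: "a n = t"
    proof -
      have "A n = t * pl n" using A2[of n] by simp
      then show ?thesis unfolding a_def using plpos[of n] by (simp add: skn)
    qed
    have rec: "\<forall>j\<in>{1..n}. X j - Y j = L j * a j - K j * a (j-1)"
    proof
      fix j assume j: "j \<in> {1..n}"
      then have js: "j = Suc (j-1)" by simp
      have "(\<Sum>k=1..Suc (j-1). d k * w k) = (\<Sum>k=1..j-1. d k * w k) + d (Suc (j-1)) * w (Suc (j-1))"
        by simp
      then have "(\<Sum>k=1..j. d k * w k) = (\<Sum>k=1..j-1. d k * w k) + d j * w j"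
        by (simp only: js[symmetric])
      then have "A j = A (j-1) + d j * w j"
        unfolding A_def by simp
      moreover have "A j = a j * (L j * w j)" using Aa[of j] Lw[of j] j by simp
      moreover have "A (j-1) = a (j-1) * (K j * w j)"
      proof -
        have "j-1 \<le> n" using j by auto
        then have "A (j-1) = a (j-1) * (pl (j-1) * sk (j-1))" by (rule Aa)
        moreover have "K j * w j = pl (j-1) * sk (j-1)" using Kw[of j] j by auto
        ultimately show ?thesis by simp
      qed
      ultimately have "d j * w j = (L j * a j - K j * a (j-1)) * w j"
        by (simp add: algebra_simps)
      moreover have "w j > 0" using wpos j by simp
      ultimately have "d j = L j * a j - K j * a (j-1)" by simp
      then show "X j - Y j = L j * a j - K j * a (j-1)" by (simp add: d_def)
    qed
    have n1: "1 \<le> n" using assms(1) by simp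
    have XY: "\<forall>j\<in>{1..n}. 0 \<le> X j \<and> X j < L j \<and> 0 \<le> Y j \<and> Y j < L j"
      using X Y unfolding chair_def by blast
    have YX: "\<forall>j\<in>{1..n}. 0 \<le> Y j \<and> Y j < L j \<and> 0 \<le> X j \<and> X j < L j"
      using XY by blast
    have chX: "\<exists>j\<in>{1..n}. X j < L j - K j" using X unfolding chair_def by blast
    have chY: "\<exists>j\<in>{1..n}. Y j < L j - K j" using Y unfolding chair_def by blast
    have le: "\<forall>j\<in>{1..n}. a j \<le> 0"
      by (rule ext_arg[OF n1 _ rec KL XY chX]) (simp add: a0 an)
    have rec': "\<forall>j\<in>{1..n}. Y j - X j = L j * (- a j) - K j * (- a (j-1))"
    proof
      fix j assume "j \<in> {1..n}"
      then have "X j - Y j = L j * a j - K j * a (j-1)" using rec by blast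
      then show "Y j - X j = L j * (- a j) - K j * (- a (j-1))" by (simp add: algebra_simps)
    qed
    have ge: "\<forall>j\<in>{1..n}. - a j \<le> 0"
      by (rule ext_arg[OF n1 _ rec' KL YX chY]) (simp add: a0 an)
    have az: "a j = 0" if "j \<in> {1..n}" for j
    proof -
      have "a j \<le> 0" using le that by blast
      moreover have "- a j \<le> 0" using ge that by blast
      ultimately show ?thesis by simp
    qed
    have t0: "t = 0" using az[of n] an n1 by simp
    show "X = Y"
    proof
      fix i
      show "X i = Y i"
      proof (cases "i \<in> {1..n}")
        case True
        have "a (i-1) = 0"
        proof (cases "i = 1")
          case True then show ?thesis using a0 t0 by simp
        next
          case False
          then have "i-1 \<in> {1..n}" using \<open>i\<in>{1..n}\<close> by auto
          then show ?thesis by (rule az)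
        qed
        moreover have "X i - Y i = L i * a i - K i * a (i-1)" using rec True by blast
        ultimately show ?thesis using az[OF True] by simp
      next
        case False
        have "X i = 0" "Y i = 0" using X Y False unfolding chair_def by auto
        then show ?thesis by simp
      qed
    qed
  qed
  have fin: "finite (chair n L K)"
  proof (rule finite_subset)
    let ?B = "\<Union>i\<in>{1..n}. {0..<L i}"
    show "chair n L K \<subseteq> {f. \<forall>x. (x \<in> {1..n} \<longrightarrow> f x \<in> ?B) \<and> (x \<notin> {1..n} \<longrightarrow> f x = 0)}"
    proof
      fix f assume "f \<in> chair n L K"
      then have f1: "\<forall>i. i \<notin> {1..n} \<longrightarrow> f i = 0" and f2: "\<forall>i\<in>{1..n}. 0 \<le> f i \<and> f i < L i"
        unfolding chair_def by blast+
      have "f x \<in> ?B" if "x \<in> {1..n}" for x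
      proof -
        have "f x \<in> {0..<L x}" using f2 that by auto
        then show ?thesis using that by blast
      qed
      then show "f \<in> {f. \<forall>x. (x \<in> {1..n} \<longrightarrow> f x \<in> ?B) \<and> (x \<notin> {1..n} \<longrightarrow> f x = 0)}"
        using f1 by blast
    qed
    show "finite {f. \<forall>x. (x \<in> {1..n} \<longrightarrow> f x \<in> ?B) \<and> (x \<notin> {1..n} \<longrightarrow> f x = (0::int))}"
      by (rule finite_set_of_finite_funs) auto
  qed
  have "splits (chair n L K) m n (beta m L K)"
    unfolding splits_def using fin inj by (simp add: card_image)
  then show ?thesis unfolding m_def .
qed

end
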